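(* Let $\mathbf{A}$ be a $(K_1,F_1,Z_1,S_1)$ PDA and $\mathbf{B}$ a $(K_2,F_2,Z_2,S_2)$ PDA. Then there exist integer sets $\mathcal{S}_\mathrm{m},\mathcal{S}_1,\ldots,\mathcal{S}_{K_1}$ and a $(K_1,K_2;F_1F_2;Z_1F_2,Z_2F_1;\mathcal{S}_\mathrm{m},\mathcal{S}_1,\ldots,\mathcal{S}_{K_1})$ HPDA such that $$\Big|\bigcup_{k_1=1}^{K_1}\mathcal{S}_{k_1}\Big|-|\mathcal{S}_\mathrm{m}|=S_1S_2,\qquad |\mathcal{S}_{k_1}|=F_1S_2\ \text{ for all }k_1\in[K_1].$$ Consequently, for every $N\ge K_1K_2$ there is an $F_1F_2$-division coded caching scheme with uncoded placement for the $(K_1,K_2;M_1,M_2;N)$ hierarchical caching system with $\frac{M_1}{N}=\frac{Z_1}{F_1}$, $\frac{M_2}{N}=\frac{Z_2}{F_2}$ and loads $$R_1=\frac{S_1S_2}{F_1F_2},\qquad R_2=\frac{S_2}{F_2}.$$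
   Context: Notation: $[a]=\{1,\ldots,a\}$. PDA. For positive integers $K,F,Z,S$ and an integer set $\mathcal{S}$ with $|\mathcal{S}|=S$, an $F\times K$ array $\mathbf{Q}=(q_{j,k})$ with entries in $\{*\}\cup\mathcal{S}$ is a $(K,F,Z,S)$ placement delivery array (PDA) (over $\mathcal{S}$; by default $\mathcal{S}=[S]$) if: (C1) the symbol $*$ appears exactly $Z$ times in each column; (C2) each integer of $\mathcal{S}$ occurs at least once in the array; (C3) for two distinct entries $q_{j_1,k_1}=q_{j_2,k_2}=s$ with $s$ an integer, we have $j_1\ne j_2$, $k_1\ne k_2$, and $q_{j_1,k_2}=q_{j_2,k_1}=*$. HPDA. Let $K_1,K_2,F,Z_1,Z_2$ be positive integers with $Z_1<F$, $Z_2<F$, and let $\mathcal{S}_\mathrm{m},\mathcal{S}_1,\ldots,\mathcal{S}_{K_1}$ be sets of integers. An $F\times(K_1+K_1K_2)$ array $\mathbf{P}=(\mathbf{P}^{(0)},\mathbf{P}^{(1)},\ldots,\mathbf{P}^{(K_1)})$, where $\mathbf{P}^{(0)}=(p^{(0)}_{j,k_1})_{j\in[F],k_1\in[K_1]}$ has every entry equal to $*$ or to "null" (blank), and for each $k_1\in[K_1]$, $\mathbf{P}^{(k_1)}=(p^{(k_1)}_{j,k_2})_{j\in[F],k_2\in[K_2]}$ has entries in $\{*\}\cup\mathcal{S}_{k_1}$, is a $(K_1,K_2;F;Z_1,Z_2;\mathcal{S}_\mathrm{m},\mathcal{S}_1,\ldots,\mathcal{S}_{K_1})$ hierarchical placement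 delivery array (HPDA) if: (B1) each column of $\mathbf{P}^{(0)}$ contains exactly $Z_1$ stars; (B2) for each $k_1\in[K_1]$, $\mathbf{P}^{(k_1)}$ is a $(K_2,F,Z_2,|\mathcal{S}_{k_1}|)$ PDA over $\mathcal{S}_{k_1}$; (B3) each integer $s\in\mathcal{S}_\mathrm{m}$ occurs in exactly one of the subarrays $\mathbf{P}^{(1)},\ldots,\mathbf{P}^{(K_1)}$, and whenever $p^{(k_1)}_{j,k_2}=s\in\mathcal{S}_\mathrm{m}$ we have $p^{(0)}_{j,k_1}=*$; (B4) for any $k_1\ne k_1'\in[K_1]$, $j,j'\in[F]$, $k_2,k_2'\in[K_2]$ with $p^{(k_1)}_{j,k_2}=p^{(k_1')}_{j',k_2'}$ an integer: if $p^{(k_1)}_{j',k_2}$ is an integer then $p^{(0)}_{j',k_1}=*$; and if $p^{(k_1')}_{j,k_2'}$ is an integer then $p^{(0)}_{j,k_1'}=*$. Hierarchical caching model $(K_1,K_2;M_1,M_2;N)$. A server stores $N$ independent files $W_1,\ldots,W_N$, each uniformly distributed on $B$ bits. There are $K_1$ mirror sites, each with a cache of $M_1B$ bits, and $K_1K_2$ users $U_{k_1,k_2}$ ($k_1\in[K_1]$, $k_2\in[K_2]$), each with a cache of $M_2B$ bits; user $U_{k_1,k_2}$ is attached to mirror site $k_1$. The server reaches all mirror sites through one error-free broadcast link; mirror site $k_1$ reaches its $K_2$ attached users through an error-free broadcast link. An $F$-division scheme with uncoded placement ($F\mid B$): each file $W_n$ is split into $F$ packets $W_{n,1},\ldots,W_{n,F}$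 of $B/F$ bits. In the placement phase (without knowledge of demands) mirror site $k_1$ stores a set $\mathcal{Z}_{k_1}$ of packets of total size at most $M_1B$ bits and user $U_{k_1,k_2}$ stores a set $\mathcal{Z}_{(k_1,k_2)}$ of packets of total size at most $M_2B$ bits. In the delivery phase, given a demand vector $\mathbf{d}=(d_{k_1,k_2})\in[N]^{K_1K_2}$, the server broadcasts to the mirror sites a message $X$ consisting of $S(\mathbf{d})$ packet-sized symbols, a function of the files and $\mathbf{d}$; each mirror site $k_1$ broadcasts to its attached users a message $X_{k_1}$ of $S_{k_1}(\mathbf{d})$ packet-sized symbols, a function of $X$, $\mathcal{Z}_{k_1}$ and $\mathbf{d}$; each user $U_{k_1,k_2}$ must recover $W_{d_{k_1,k_2}}$ from $X_{k_1}$, $\mathcal{Z}_{(k_1,k_2)}$ and $\mathbf{d}$. The loads are $R_1=\max_{\mathbf{d}}S(\mathbf{d})/F$ and $R_2=\max_{k_1,\mathbf{d}}S_{k_1}(\mathbf{d})/F$. *)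

theory Defs
  imports Main "HOL.Real"
begin

datatype entry = Star | Val int

datatype mentry = MStar | MNull

text \<open>An F x K array is a function Q with Q j k the entry in row j (1..F), column k (1..K).
  (K,F,Z,S) PDA over the integer set SS, with |SS| = S.\<close>
definition is_PDA :: "nat \<Rightarrow> nat \<Rightarrow> nat \<Rightarrow> nat \<Rightarrow> int set \<Rightarrow> (nat \<Rightarrow> nat \<Rightarrow> entry) \<Rightarrow> bool" where
  "is_PDA K F Z S SS Q \<longleftrightarrow>
     0 < K \<and> 0 < F \<and> 0 < Z \<and> 0 < S \<and> finite SS \<and> card SS = S \<and>
     (\<forall>j\<in>{1..F}. \<forall>k\<in>{1..K}. Q j k = Star \<or> (\<exists>s\<in>SS. Q j k = Val s)) \<and>
     (\<forall>k\<in>{1..K}. card {j\<in>{1..F}. Q j k = Star} = Z) \<and>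
     (\<forall>s\<in>SS. \<exists>j\<in>{1..F}. \<exists>k\<in>{1..K}. Q j k = Val s) \<and>
     (\<forall>j1\<in>{1..F}. \<forall>j2\<in>{1..F}. \<forall>k1\<in>{1..K}. \<forall>k2\<in>{1..K}. \<forall>s.
        Q j1 k1 = Val s \<and> Q j2 k2 = Val s \<and> (j1, k1) \<noteq> (j2, k2) \<longrightarrow>
        j1 \<noteq> j2 \<and> k1 \<noteq> k2 \<and> Q j1 k2 = Star \<and> Q j2 k1 = Star)"

definition is_int_entry :: "entry \<Rightarrow> bool" where
  "is_int_entry e \<longleftrightarrow> e \<noteq> Star"

text \<open>(K1,K2;F;Z1,Z2;Sm,S_1,...,S_K1) HPDA.  P0 j k1 is the entry of P^(0) in row j, column k1;
  P k1 j k2 is the entry of P^(k1) in row j, column k2; Ss k1 is the set S_k1.\<close>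
definition is_HPDA :: "nat \<Rightarrow> nat \<Rightarrow> nat \<Rightarrow> nat \<Rightarrow> nat \<Rightarrow> int set \<Rightarrow> (nat \<Rightarrow> int set)
    \<Rightarrow> (nat \<Rightarrow> nat \<Rightarrow> mentry) \<Rightarrow> (nat \<Rightarrow> nat \<Rightarrow> nat \<Rightarrow> entry) \<Rightarrow> bool" where
  "is_HPDA K1 K2 F Z1 Z2 Sm Ss P0 P \<longleftrightarrow>
     0 < K1 \<and> 0 < K2 \<and> 0 < F \<and> 0 < Z1 \<and> 0 < Z2 \<and> Z1 < F \<and> Z2 < F \<and>
     \<comment> \<open>(B1)\<close>
     (\<forall>k1\<in>{1..K1}. card {j\<in>{1..F}. P0 j k1 = MStar} = Z1) \<and>
     \<comment> \<open>(B2)\<close>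
     (\<forall>k1\<in>{1..K1}. is_PDA K2 F Z2 (card (Ss k1)) (Ss k1) (P k1)) \<and>
     \<comment> \<open>(B3)\<close>
     (\<forall>s\<in>Sm. (\<exists>!k1. k1 \<in> {1..K1} \<and> (\<exists>j\<in>{1..F}. \<exists>k2\<in>{1..K2}. P k1 j k2 = Val s)) \<and>
        (\<forall>k1\<in>{1..K1}. \<forall>j\<in>{1..F}. \<forall>k2\<in>{1..K2}. P k1 j k2 = Val s \<longrightarrow> P0 j k1 = MStar)) \<and>
     \<comment> \<open>(B4)\<close>
     (\<forall>k1\<in>{1..K1}. \<forall>k1'\<in>{1..K1}. \<forall>j\<in>{1..F}. \<forall>j'\<in>{1..F}. \<forall>k2\<in>{1..K2}. \<forall>k2'\<in>{1..K2}. \<forall>s.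
        k1 \<noteq> k1' \<and> P k1 j k2 = Val s \<and> P k1' j' k2' = Val s \<longrightarrow>
        (is_int_entry (P k1 j' k2) \<longrightarrow> P0 j' k1 = MStar) \<and>
        (is_int_entry (P k1' j k2') \<longrightarrow> P0 j k1' = MStar))"

text \<open>A packet is a bit string (bool list) of length B div F.
  A file library W assigns to file n (1..N) and packet index f (1..F) the packet W n f.\<close>

definition valid_library :: "nat \<Rightarrow> nat \<Rightarrow> nat \<Rightarrow> (nat \<Rightarrow> nat \<Rightarrow> bool list) \<Rightarrow> bool" where
  "valid_library N F L W \<longleftrightarrow> (\<forall>n\<in>{1..N}. \<forall>f\<in>{1..F}. length (W n f) = L)"

definition valid_demand :: "nat \<Rightarrow> nat \<Rightarrow> nat \<Rightarrow> (nat \<Rightarrow> nat \<Rightarrow> nat) \<Rightarrow> bool" where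
  "valid_demand K1 K2 N d \<longleftrightarrow> (\<forall>k1\<in>{1..K1}. \<forall>k2\<in>{1..K2}. d k1 k2 \<in> {1..N})"

definition cache_content :: "(nat \<times> nat) set \<Rightarrow> (nat \<Rightarrow> nat \<Rightarrow> bool list) \<Rightarrow> (nat \<Rightarrow> nat \<Rightarrow> bool list)" where
  "cache_content Zc W = (\<lambda>n f. if (n, f) \<in> Zc then W n f else [])"

text \<open>Zm k1: packets cached at mirror k1; Zu k1 k2: packets cached at user U_{k1,k2};
  enc: server encoder (function of demand and files), Sd d its number of packet-sized symbols;
  menc: mirror encoder (function of its index, the demand, the server message and its cache),
  Smir k1 d its number of symbols; dec: user decoder, returns packet f of the requested file.\<close>
definition hier_scheme :: "nat \<Rightarrow> nat \<Rightarrow> real \<Rightarrow> real \<Rightarrow> nat \<Rightarrow> nat \<Rightarrow> nat \<Rightarrow> real \<Rightarrow> real \<Rightarrow> bool" where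
  "hier_scheme K1 K2 M1 M2 N B F R1 R2 \<longleftrightarrow>
     0 < F \<and> F dvd B \<and>
     (\<exists>(Zm :: nat \<Rightarrow> (nat \<times> nat) set) (Zu :: nat \<Rightarrow> nat \<Rightarrow> (nat \<times> nat) set)
        (enc :: (nat \<Rightarrow> nat \<Rightarrow> nat) \<Rightarrow> (nat \<Rightarrow> nat \<Rightarrow> bool list) \<Rightarrow> bool list list)
        (Sd :: (nat \<Rightarrow> nat \<Rightarrow> nat) \<Rightarrow> nat)
        (menc :: nat \<Rightarrow> (nat \<Rightarrow> nat \<Rightarrow> nat) \<Rightarrow> bool list list \<Rightarrow> (nat \<Rightarrow> nat \<Rightarrow> bool list) \<Rightarrow> bool list list)
        (Smir :: nat \<Rightarrow> (nat \<Rightarrow> nat \<Rightarrow> nat) \<Rightarrow> nat)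
        (dec :: nat \<Rightarrow> nat \<Rightarrow> (nat \<Rightarrow> nat \<Rightarrow> nat) \<Rightarrow> bool list list \<Rightarrow> (nat \<Rightarrow> nat \<Rightarrow> bool list) \<Rightarrow> nat \<Rightarrow> bool list).
       \<comment> \<open>placement (independent of the demand), memory constraints\<close>
       (\<forall>k1\<in>{1..K1}. Zm k1 \<subseteq> {1..N} \<times> {1..F} \<and>
           real (card (Zm k1) * (B div F)) \<le> M1 * real B) \<and>
       (\<forall>k1\<in>{1..K1}. \<forall>k2\<in>{1..K2}. Zu k1 k2 \<subseteq> {1..N} \<times> {1..F} \<and>
           real (card (Zu k1 k2) * (B div F)) \<le> M2 * real B) \<and>
       \<comment> \<open>delivery and decodability, for every demand and every realization of the files\<close>
       (\<forall>d W. valid_demand K1 K2 N d \<and> valid_library N F (B div F) W \<longrightarrow>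
          length (enc d W) = Sd d \<and> (\<forall>x\<in>set (enc d W). length x = B div F) \<and>
          (\<forall>k1\<in>{1..K1}.
             length (menc k1 d (enc d W) (cache_content (Zm k1) W)) = Smir k1 d \<and>
             (\<forall>y\<in>set (menc k1 d (enc d W) (cache_content (Zm k1) W)). length y = B div F) \<and>
             (\<forall>k2\<in>{1..K2}. \<forall>f\<in>{1..F}.
                dec k1 k2 d (menc k1 d (enc d W) (cache_content (Zm k1) W))
                    (cache_content (Zu k1 k2) W) f = W (d k1 k2) f))) \<and>
       \<comment> \<open>loads: R1 = max_d S(d)/F, R2 = max_{k1,d} S_k1(d)/F\<close>
       (\<forall>d. valid_demand K1 K2 N d \<longrightarrow> real (Sd d) / real F \<le> R1) \<and>
       (\<exists>d. valid_demand K1 K2 N d \<and> real (Sd d) / real F = R1) \<and>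
       (\<forall>d. \<forall>k1\<in>{1..K1}. valid_demand K1 K2 N d \<longrightarrow> real (Smir k1 d) / real F \<le> R2) \<and>
       (\<exists>d. \<exists>k1\<in>{1..K1}. valid_demand K1 K2 N d \<and> real (Smir k1 d) / real F = R2))"

end

theory Submission
  imports Defs "HOL-Library.Nat_Bijection"
begin

lemma pda_entry: "is_PDA K F Z S SS Q \<Longrightarrow> j\<in>{1..F} \<Longrightarrow> k\<in>{1..K} \<Longrightarrow> Q j k = Star \<or> (\<exists>s\<in>SS. Q j k = Val s)"
  unfolding is_PDA_def by blast
lemma pda_card: "is_PDA K F Z S SS Q \<Longrightarrow> k\<in>{1..K} \<Longrightarrow> card {j\<in>{1..F}. Q j k = Star} = Z"
  unfolding is_PDA_def by blast
lemma pda_occ: "is_PDA K F Z S SS Q \<Longrightarrow> s\<in>SS \<Longrightarrow> \<exists>j\<in>{1..F}. \<exists>k\<in>{1..K}. Q j k = Val s"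
  unfolding is_PDA_def by blast
lemma pda_C3: "is_PDA K F Z S SS Q \<Longrightarrow> j1\<in>{1..F} \<Longrightarrow> j2\<in>{1..F} \<Longrightarrow> k1\<in>{1..K} \<Longrightarrow> k2\<in>{1..K}
  \<Longrightarrow> Q j1 k1 = Val s \<Longrightarrow> Q j2 k2 = Val s \<Longrightarrow> (j1, k1) \<noteq> (j2, k2) \<Longrightarrow>
        j1 \<noteq> j2 \<and> k1 \<noteq> k2 \<and> Q j1 k2 = Star \<and> Q j2 k1 = Star"
  unfolding is_PDA_def by blast
lemma pda_pos: "is_PDA K F Z S SS Q \<Longrightarrow> 0 < K \<and> 0 < F \<and> 0 < Z \<and> 0 < S \<and> finite SS \<and> card SS = S"
  unfolding is_PDA_def by blast

lemma pda_ZF: assumes "is_PDA K F Z S SS Q" shows "Z < F"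
proof -
  have "SS \<noteq> {}" using pda_pos[OF assms] by auto
  then obtain s where "s \<in> SS" by auto
  then obtain j k where jk: "j\<in>{1..F}" "k\<in>{1..K}" "Q j k = Val s" using pda_occ[OF assms] by blast
  have "{j'\<in>{1..F}. Q j' k = Star} \<subseteq> {1..F} - {j}" using jk by auto
  then have "card {j'\<in>{1..F}. Q j' k = Star} \<le> card ({1..F} - {j})" by (intro card_mono) auto
  also have "\<dots> = F - 1" using jk by simp
  finally have "card {j'\<in>{1..F}. Q j' k = Star} \<le> F - 1" .
  then show ?thesis using pda_card[OF assms jk(2)] pda_pos[OF assms] by linarith
qed

definition xsum :: "nat \<Rightarrow> ('a \<Rightarrow> bool list) \<Rightarrow> 'a set \<Rightarrow> bool list" where
  "xsum L f A = map (\<lambda>i. odd (card {a\<in>A. f a ! i})) [0..<L]"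
definition xdec :: "nat \<Rightarrow> bool list \<Rightarrow> ('a \<Rightarrow> bool list) \<Rightarrow> 'a set \<Rightarrow> bool list" where
  "xdec L m f R = map (\<lambda>i. (m ! i) \<noteq> odd (card {a\<in>R. f a ! i})) [0..<L]"

lemma xsum_len [simp]: "length (xsum L f A) = L" by (simp add: xsum_def)
lemma xdec_len [simp]: "length (xdec L m f A) = L" by (simp add: xdec_def)
lemma xsum_cong: "(\<And>a. a \<in> A \<Longrightarrow> f a = g a) \<Longrightarrow> xsum L f A = xsum L g A"
proof -
  assume h: "\<And>a. a \<in> A \<Longrightarrow> f a = g a"
  have "\<And>i. {a\<in>A. f a ! i} = {a\<in>A. g a ! i}" using h by auto
  then show ?thesis by (simp add: xsum_def)
qed

lemma xdec_correct:
  assumes "finite A" "t \<in> A" "length (f t) = L" "\<And>a. a \<in> A - {t} \<Longrightarrow> g a = f a"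
  shows "xdec L (xsum L f A) g (A - {t}) = f t"
proof (rule nth_equalityI)
  show "length (xdec L (xsum L f A) g (A - {t})) = length (f t)" using assms by simp
next
  fix i assume "i < length (xdec L (xsum L f A) g (A - {t}))"
  then have i: "i < L" by simp
  define R where "R = {a\<in>A - {t}. f a ! i}"
  have gR: "{a\<in>A - {t}. g a ! i} = R" unfolding R_def using assms(4) by auto
  have fR: "finite R" unfolding R_def using assms(1) by simp
  have tR: "t \<notin> R" unfolding R_def by simp
  have "{a\<in>A. f a ! i} = (if f t ! i then insert t R else R)" unfolding R_def using assms(2) by auto
  then have c: "card {a\<in>A. f a ! i} = (if f t ! i then Suc (card R) else card R)" using fR tR by simp
  show "xdec L (xsum L f A) g (A - {t}) ! i = f t ! i"
    using i c gR by (simp add: xdec_def xsum_def)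
qed

locale hp =
  fixes K1 F1 Z1 S1 K2 F2 Z2 S2 :: nat and QA QB :: "nat \<Rightarrow> nat \<Rightarrow> entry"
  assumes A: "is_PDA K1 F1 Z1 S1 {1..int S1} QA"
      and B: "is_PDA K2 F2 Z2 S2 {1..int S2} QB"
begin

definition r1 :: "nat \<Rightarrow> nat" where "r1 j = (j - 1) div F2 + 1"
definition r2 :: "nat \<Rightarrow> nat" where "r2 j = (j - 1) mod F2 + 1"
definition pidx :: "nat \<Rightarrow> nat \<Rightarrow> nat" where "pidx a b = (a - 1) * F2 + b"

lemma F2pos: "0 < F2" using pda_pos[OF B] by simp
lemma F1pos: "0 < F1" using pda_pos[OF A] by simp

lemma pidx_split: "1 \<le> b \<Longrightarrow> pidx a b - 1 = (a - 1) * F2 + (b - 1)"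
  by (simp add: pidx_def)

lemma r1_pidx: "1 \<le> a \<Longrightarrow> 1 \<le> b \<Longrightarrow> b \<le> F2 \<Longrightarrow> r1 (pidx a b) = a"
proof -
  assume h: "1 \<le> a" "1 \<le> b" "b \<le> F2"
  have c: "b - 1 < F2" using h by simp
  have "((a - 1) * F2 + (b - 1)) div F2 = a - 1" using c by simp
  then show ?thesis using h pidx_split[OF h(2)] unfolding r1_def by simp
qed

lemma r2_pidx: "1 \<le> a \<Longrightarrow> 1 \<le> b \<Longrightarrow> b \<le> F2 \<Longrightarrow> r2 (pidx a b) = b"
proof -
  assume h: "1 \<le> a" "1 \<le> b" "b \<le> F2"
  have c: "b - 1 < F2" using h by simp
  have "((a - 1) * F2 + (b - 1)) mod F2 = b - 1" using c by simp
  then show ?thesis using h pidx_split[OF h(2)] unfolding r2_def by simp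
qed

lemma pidx_r: "1 \<le> j \<Longrightarrow> pidx (r1 j) (r2 j) = j"
  unfolding pidx_def r1_def r2_def
  by (metis add.commute add_diff_cancel_left' le_add_diff_inverse mod_div_mult_eq plus_1_eq_Suc add_Suc_right)

lemma pidx_range: "a \<in> {1..F1} \<Longrightarrow> b \<in> {1..F2} \<Longrightarrow> pidx a b \<in> {1..F1*F2}"
proof -
  assume h: "a \<in> {1..F1}" "b \<in> {1..F2}"
  have "(a - 1) * F2 + b \<le> (F1 - 1) * F2 + F2" using h by (intro add_mono mult_right_mono) auto
  also have "\<dots> = F1 * F2" using h by (cases F1) auto
  finally show ?thesis using h by (auto simp: pidx_def)
qed

lemma r_range: "j \<in> {1..F1*F2} \<Longrightarrow> r1 j \<in> {1..F1} \<and> r2 j \<in> {1..F2}"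
proof -
  assume h: "j \<in> {1..F1*F2}"
  have "j - 1 < F1 * F2" using h by auto
  then have "(j - 1) div F2 < F1" using F2pos by (simp add: div_less_iff_less_mult mult.commute)
  moreover have "(j - 1) mod F2 < F2" using F2pos by simp
  ultimately show ?thesis by (auto simp: r1_def r2_def)
qed

lemma rows_set: "{j\<in>{1..F1*F2}. R (r1 j) (r2 j)} = (\<lambda>(a,b). pidx a b) ` {(a,b). a\<in>{1..F1} \<and> b\<in>{1..F2} \<and> R a b}"
proof (rule set_eqI, rule iffI)
  fix j assume "j \<in> {j\<in>{1..F1*F2}. R (r1 j) (r2 j)}"
  then have "j \<in> {1..F1*F2}" "R (r1 j) (r2 j)" by auto
  then show "j \<in> (\<lambda>(a,b). pidx a b) ` {(a,b). a\<in>{1..F1} \<and> b\<in>{1..F2} \<and> R a b}"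
    using r_range pidx_r by (intro image_eqI[of _ _ "(r1 j, r2 j)"]) auto
next
  fix j assume "j \<in> (\<lambda>(a,b). pidx a b) ` {(a,b). a\<in>{1..F1} \<and> b\<in>{1..F2} \<and> R a b}"
  then obtain a b where "a\<in>{1..F1}" "b\<in>{1..F2}" "R a b" "j = pidx a b" by auto
  then show "j \<in> {j\<in>{1..F1*F2}. R (r1 j) (r2 j)}" using pidx_range r1_pidx r2_pidx by auto
qed

lemma pidx_inj: "inj_on (\<lambda>(a,b). pidx a b) {(a,b). a\<in>{1..F1} \<and> b\<in>{1..F2} \<and> R a b}"
proof (rule inj_onI)
  fix x y assume "x \<in> {(a,b). a\<in>{1..F1} \<and> b\<in>{1..F2} \<and> R a b}" "y \<in> {(a,b). a\<in>{1..F1} \<and> b\<in>{1..F2} \<and> R a b}"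
    "(\<lambda>(a,b). pidx a b) x = (\<lambda>(a,b). pidx a b) y"
  then obtain a b a' b' where h: "x = (a,b)" "y = (a',b')" "1 \<le> a" "1 \<le> b" "b \<le> F2" "1 \<le> a'" "1 \<le> b'" "b' \<le> F2"
    "pidx a b = pidx a' b'" by auto
  then show "x = y" using r1_pidx[of a b] r1_pidx[of a' b'] r2_pidx[of a b] r2_pidx[of a' b'] by metis
qed

lemma rows_card: "card {j\<in>{1..F1*F2}. R (r1 j) (r2 j)} = card {(a,b). a\<in>{1..F1} \<and> b\<in>{1..F2} \<and> R a b}"
  unfolding rows_set by (rule card_image[OF pidx_inj])

lemma card_rowsA: "k1 \<in> {1..K1} \<Longrightarrow> card {j\<in>{1..F1*F2}. QA (r1 j) k1 = Star} = Z1 * F2"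
proof -
  assume k: "k1 \<in> {1..K1}"
  have "{(a,b). a\<in>{1..F1} \<and> b\<in>{1..F2} \<and> QA a k1 = Star} = {a\<in>{1..F1}. QA a k1 = Star} \<times> {1..F2}" by auto
  then show ?thesis using rows_card[of "\<lambda>a b. QA a k1 = Star"] pda_card[OF A k]
    by (simp add: card_cartesian_product)
qed

lemma card_rowsB: "k2 \<in> {1..K2} \<Longrightarrow> card {j\<in>{1..F1*F2}. QB (r2 j) k2 = Star} = Z2 * F1"
proof -
  assume k: "k2 \<in> {1..K2}"
  have "{(a,b). a\<in>{1..F1} \<and> b\<in>{1..F2} \<and> QB b k2 = Star} = {1..F1} \<times> {b\<in>{1..F2}. QB b k2 = Star}" by auto
  then show ?thesis using rows_card[of "\<lambda>a b. QB b k2 = Star"] pda_card[OF B k]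
    by (simp add: card_cartesian_product)
qed

definition sh :: "int \<Rightarrow> int \<Rightarrow> int" where "sh s1 s2 = - int (prod_encode (nat s1, nat s2)) - 1"
definition pv :: "nat \<Rightarrow> nat \<Rightarrow> int \<Rightarrow> int" where "pv k1 j1 s2 = int (prod_encode (k1, prod_encode (j1, nat s2)))"
definition g :: "nat \<Rightarrow> nat \<Rightarrow> int \<Rightarrow> int" where
  "g k1 j1 s2 = (case QA j1 k1 of Star \<Rightarrow> pv k1 j1 s2 | Val s1 \<Rightarrow> sh s1 s2)"
definition PP :: "nat \<Rightarrow> nat \<Rightarrow> nat \<Rightarrow> entry" where
  "PP k1 j k2 = (case QB (r2 j) k2 of Star \<Rightarrow> Star | Val s2 \<Rightarrow> Val (g k1 (r1 j) s2))"
definition P0 :: "nat \<Rightarrow> nat \<Rightarrow> mentry" where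
  "P0 j k1 = (if QA (r1 j) k1 = Star then MStar else MNull)"
definition Ss :: "nat \<Rightarrow> int set" where
  "Ss k1 = (\<lambda>(j1,s2). g k1 j1 s2) ` ({1..F1} \<times> {1..int S2})"
definition Sm :: "int set" where
  "Sm = (\<lambda>(k1,j1,s2). pv k1 j1 s2) ` {(k1,j1,s2). k1\<in>{1..K1} \<and> j1\<in>{1..F1} \<and> QA j1 k1 = Star \<and> s2 \<in> {1..int S2}}"
definition Sh :: "int set" where
  "Sh = (\<lambda>(s1,s2). sh s1 s2) ` ({1..int S1} \<times> {1..int S2})"

lemma sh_neg: "sh a b < 0" by (simp add: sh_def)
lemma pv_nonneg: "pv k j s \<ge> 0" by (simp add: pv_def)
lemma sh_inj: "sh a b = sh c d \<Longrightarrow> 0 < a \<Longrightarrow> 0 < b \<Longrightarrow> 0 < c \<Longrightarrow> 0 < d \<Longrightarrow> a = c \<and> b = d"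
  by (simp add: sh_def) (metis eq_nat_nat_iff less_imp_le)
lemma pv_inj: "pv k j s = pv k' j' s' \<Longrightarrow> 0 < s \<Longrightarrow> 0 < s' \<Longrightarrow> k = k' \<and> j = j' \<and> s = s'"
  by (simp add: pv_def) (metis eq_nat_nat_iff less_imp_le)

lemma QA_cases: "j1 \<in> {1..F1} \<Longrightarrow> k1 \<in> {1..K1} \<Longrightarrow> QA j1 k1 = Star \<or> (\<exists>s1\<in>{1..int S1}. QA j1 k1 = Val s1)"
  using pda_entry[OF A] by blast
lemma QB_cases: "j2 \<in> {1..F2} \<Longrightarrow> k2 \<in> {1..K2} \<Longrightarrow> QB j2 k2 = Star \<or> (\<exists>s2\<in>{1..int S2}. QB j2 k2 = Val s2)"
  using pda_entry[OF B] by blast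

lemma gval:
  assumes "k1 \<in> {1..K1}" "j1 \<in> {1..F1}" "s2 \<in> {1..int S2}" "k1' \<in> {1..K1}" "j1' \<in> {1..F1}" "s2' \<in> {1..int S2}"
    "g k1 j1 s2 = g k1' j1' s2'"
  shows "s2 = s2' \<and> ((k1 = k1' \<and> j1 = j1' \<and> QA j1 k1 = Star) \<or> (\<exists>s1. QA j1 k1 = Val s1 \<and> QA j1' k1' = Val s1))"
proof -
  have p: "0 < s2" "0 < s2'" using assms by auto
  consider (a) "QA j1 k1 = Star" | (b) s1 where "s1\<in>{1..int S1}" "QA j1 k1 = Val s1" using QA_cases assms by blast
  then show ?thesis
  proof cases
    case a
    consider (aa) "QA j1' k1' = Star" | (bb) s1 where "s1\<in>{1..int S1}" "QA j1' k1' = Val s1" using QA_cases assms by blast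
    then show ?thesis
    proof cases
      case aa then show ?thesis using a assms(7) pv_inj[OF _ p] by (simp add: g_def)
    next
      case bb then show ?thesis using a assms(7) sh_neg[of s1 s2'] pv_nonneg[of k1 j1 s2] by (simp add: g_def)
    qed
  next
    case b
    consider (aa) "QA j1' k1' = Star" | (bb) s1' where "s1'\<in>{1..int S1}" "QA j1' k1' = Val s1'" using QA_cases assms by blast
    then show ?thesis
    proof cases
      case aa then show ?thesis using b assms(7) sh_neg[of s1 s2] pv_nonneg[of k1' j1' s2'] by (simp add: g_def)
    next
      case bb then show ?thesis using b assms(7) sh_inj[of s1 s2 s1' s2'] p by (simp add: g_def)
    qed
  qed
qed

lemma g_inj: "k1 \<in> {1..K1} \<Longrightarrow> inj_on (\<lambda>(j1,s2). g k1 j1 s2) ({1..F1} \<times> {1..int S2})"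
proof (rule inj_onI)
  fix x y assume k: "k1 \<in> {1..K1}" and xy: "x \<in> {1..F1} \<times> {1..int S2}" "y \<in> {1..F1} \<times> {1..int S2}"
    "(\<lambda>(j1,s2). g k1 j1 s2) x = (\<lambda>(j1,s2). g k1 j1 s2) y"
  then obtain j1 s2 j1' s2' where h: "x = (j1,s2)" "y = (j1',s2')" "j1 \<in> {1..F1}" "s2 \<in> {1..int S2}"
    "j1' \<in> {1..F1}" "s2' \<in> {1..int S2}" "g k1 j1 s2 = g k1 j1' s2'" by auto
  from gval[OF k h(3,4) k h(5,6,7)] have "s2 = s2'" and
    c: "(j1 = j1') \<or> (\<exists>s1. QA j1 k1 = Val s1 \<and> QA j1' k1 = Val s1)" by auto
  have "j1 = j1'"
  proof (rule ccontr)
    assume "j1 \<noteq> j1'"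
    then obtain s1 where "QA j1 k1 = Val s1" "QA j1' k1 = Val s1" using c by auto
    then show False using pda_C3[OF A h(3) h(5) k k] \<open>j1 \<noteq> j1'\<close> by auto
  qed
  then show "x = y" using h \<open>s2 = s2'\<close> by simp
qed

lemma card_Ss: "k1 \<in> {1..K1} \<Longrightarrow> card (Ss k1) = F1 * S2"
proof -
  assume k: "k1 \<in> {1..K1}"
  have "card (Ss k1) = card ({1..F1} \<times> {1..int S2})" unfolding Ss_def by (rule card_image[OF g_inj[OF k]])
  then show ?thesis by (simp add: card_cartesian_product)
qed

lemma Sh_card: "card Sh = S1 * S2"
proof -
  have "inj_on (\<lambda>(s1,s2). sh s1 s2) ({1..int S1} \<times> {1..int S2})"
    by (rule inj_onI) (auto dest: sh_inj)
  then show ?thesis unfolding Sh_def by (simp add: card_image card_cartesian_product)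
qed

lemma Sm_finite: "finite Sm"
proof -
  have "{(k1,j1,s2). k1\<in>{1..K1} \<and> j1\<in>{1..F1} \<and> QA j1 k1 = Star \<and> s2 \<in> {1..int S2}} \<subseteq> {1..K1} \<times> {1..F1} \<times> {1..int S2}"
    by auto
  then show ?thesis unfolding Sm_def by (meson finite_SigmaI finite_atLeastAtMost finite_atLeastAtMost_int finite_imageI finite_subset)
qed

lemma union_eq: "(\<Union>k1\<in>{1..K1}. Ss k1) = Sm \<union> Sh"
proof (rule set_eqI, rule iffI)
  fix x assume "x \<in> (\<Union>k1\<in>{1..K1}. Ss k1)"
  then obtain k1 j1 s2 where h: "k1\<in>{1..K1}" "j1 \<in> {1..F1}" "s2 \<in> {1..int S2}" "x = g k1 j1 s2"
    unfolding Ss_def by auto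
  consider (a) "QA j1 k1 = Star" | (b) s1 where "s1\<in>{1..int S1}" "QA j1 k1 = Val s1" using QA_cases h by blast
  then show "x \<in> Sm \<union> Sh"
  proof cases
    case a then have "x = pv k1 j1 s2" using h by (simp add: g_def)
    then show ?thesis using a h unfolding Sm_def by (auto intro!: image_eqI[of _ _ "(k1,j1,s2)"])
  next
    case b then have "x = sh s1 s2" using h by (simp add: g_def)
    then show ?thesis using b h unfolding Sh_def by (auto intro!: image_eqI[of _ _ "(s1,s2)"])
  qed
next
  fix x assume "x \<in> Sm \<union> Sh"
  then show "x \<in> (\<Union>k1\<in>{1..K1}. Ss k1)"
  proof
    assume "x \<in> Sm"
    then obtain k1 j1 s2 where h: "k1\<in>{1..K1}" "j1 \<in> {1..F1}" "QA j1 k1 = Star" "s2 \<in> {1..int S2}" "x = pv k1 j1 s2"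
      unfolding Sm_def by auto
    then have "x = g k1 j1 s2" by (simp add: g_def)
    then show ?thesis using h unfolding Ss_def by blast
  next
    assume "x \<in> Sh"
    then obtain s1 s2 where h: "s1\<in>{1..int S1}" "s2 \<in> {1..int S2}" "x = sh s1 s2" unfolding Sh_def by auto
    then obtain j1 k1 where jk: "j1\<in>{1..F1}" "k1\<in>{1..K1}" "QA j1 k1 = Val s1" using pda_occ[OF A] by blast
    then have "x = g k1 j1 s2" using h by (simp add: g_def)
    then show ?thesis using h jk unfolding Ss_def by blast
  qed
qed

lemma card_union: "card (\<Union>k1\<in>{1..K1}. Ss k1) = card Sm + S1 * S2"
proof -
  have "Sm \<inter> Sh = {}"
  proof (rule ccontr)
    assume "Sm \<inter> Sh \<noteq> {}"
    then obtain x where "x \<in> Sm" "x \<in> Sh" by auto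
    then show False unfolding Sm_def Sh_def using sh_neg pv_nonneg by (auto simp del: sh_def) (metis not_le)
  qed
  moreover have "finite Sh" unfolding Sh_def by simp
  ultimately show ?thesis unfolding union_eq using Sm_finite Sh_card by (simp add: card_Un_disjoint)
qed

lemma PP_val: "j \<in> {1..F1*F2} \<Longrightarrow> k2 \<in> {1..K2} \<Longrightarrow> PP k1 j k2 = Val s \<Longrightarrow>
   \<exists>s2\<in>{1..int S2}. QB (r2 j) k2 = Val s2 \<and> s = g k1 (r1 j) s2"
proof -
  assume h: "j \<in> {1..F1*F2}" "k2 \<in> {1..K2}" "PP k1 j k2 = Val s"
  consider (a) "QB (r2 j) k2 = Star" | (b) s2 where "s2\<in>{1..int S2}" "QB (r2 j) k2 = Val s2"
    using QB_cases r_range[OF h(1)] h(2) by blast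
  then show ?thesis
  proof cases
    case a then show ?thesis using h(3) by (simp add: PP_def)
  next
    case b then show ?thesis using h(3) by (auto simp: PP_def)
  qed
qed

lemma PP_pda: assumes k: "k1 \<in> {1..K1}" shows "is_PDA K2 (F1*F2) (Z2*F1) (card (Ss k1)) (Ss k1) (PP k1)"
proof -
  have e0: "0 < K2" "0 < Z2*F1" "0 < F1 * F2" "0 < card (Ss k1)" "finite (Ss k1)"
  proof -
    show "0 < K2" using pda_pos[OF B] by simp
    show "0 < Z2*F1" using pda_pos[OF B] F1pos by simp
    show "0 < F1 * F2" using F1pos F2pos by simp
    show "0 < card (Ss k1)" using card_Ss[OF k] F1pos pda_pos[OF B] by simp
    show "finite (Ss k1)" unfolding Ss_def by (rule finite_imageI) simp
  qed
  have e1: "PP k1 j k2 = Star \<or> (\<exists>s\<in>Ss k1. PP k1 j k2 = Val s)" if h: "j \<in> {1..F1*F2}" "k2 \<in> {1..K2}" for j k2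
  proof -
    consider (a) "QB (r2 j) k2 = Star" | (b) s2 where "s2\<in>{1..int S2}" "QB (r2 j) k2 = Val s2"
      using QB_cases r_range[OF h(1)] h(2) by blast
    then show ?thesis
    proof cases
      case a then show ?thesis by (simp add: PP_def)
    next
      case b
      have "g k1 (r1 j) s2 \<in> Ss k1" unfolding Ss_def
        using r_range[OF h(1)] b(1) by (intro image_eqI[of _ _ "(r1 j, s2)"]) auto
      moreover have "PP k1 j k2 = Val (g k1 (r1 j) s2)" using b(2) by (simp add: PP_def)
      ultimately show ?thesis by blast
    qed
  qed
  have e2: "card {j\<in>{1..F1*F2}. PP k1 j k2 = Star} = Z2 * F1" if h: "k2 \<in> {1..K2}" for k2
  proof -
    have "PP k1 j k2 = Star \<longleftrightarrow> QB (r2 j) k2 = Star" for j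
      by (cases "QB (r2 j) k2") (auto simp: PP_def)
    then have "{j\<in>{1..F1*F2}. PP k1 j k2 = Star} = {j\<in>{1..F1*F2}. QB (r2 j) k2 = Star}"
      by auto
    then show ?thesis using card_rowsB[OF h] by simp
  qed
  have e3: "\<exists>j\<in>{1..F1*F2}. \<exists>k2\<in>{1..K2}. PP k1 j k2 = Val s" if sin: "s \<in> Ss k1" for s
  proof -
    obtain j1 s2 where h: "j1 \<in> {1..F1}" "s2 \<in> {1..int S2}" "s = g k1 j1 s2" using sin unfolding Ss_def by auto
    then obtain j2 k2 where jk: "j2 \<in> {1..F2}" "k2 \<in> {1..K2}" "QB j2 k2 = Val s2" using pda_occ[OF B] by blast
    have "PP k1 (pidx j1 j2) k2 = Val s" using h jk r1_pidx r2_pidx by (simp add: PP_def)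
    then show ?thesis using pidx_range h jk by blast
  qed
  have e4: "j1 \<noteq> j2 \<and> k1' \<noteq> k2 \<and> PP k1 j1 k2 = Star \<and> PP k1 j2 k1' = Star"
    if h: "j1 \<in> {1..F1*F2}" "j2 \<in> {1..F1*F2}" "k1' \<in> {1..K2}" "k2 \<in> {1..K2}"
      "PP k1 j1 k1' = Val s" "PP k1 j2 k2 = Val s" "(j1, k1') \<noteq> (j2, k2)" for j1 j2 k1' k2 s
  proof -
    obtain s2 where s2: "s2\<in>{1..int S2}" "QB (r2 j1) k1' = Val s2" "s = g k1 (r1 j1) s2" using PP_val h by blast
    obtain s2' where s2': "s2'\<in>{1..int S2}" "QB (r2 j2) k2 = Val s2'" "s = g k1 (r1 j2) s2'" using PP_val h by blast
    have R1: "r1 j1 \<in> {1..F1}" "r2 j1 \<in> {1..F2}" using r_range[OF h(1)] by auto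
    have R2: "r1 j2 \<in> {1..F1}" "r2 j2 \<in> {1..F2}" using r_range[OF h(2)] by auto
    from gval[OF k R1(1) s2(1) k R2(1) s2'(1)] s2 s2' have eq: "s2 = s2'" and
      c: "r1 j1 = r1 j2 \<or> (\<exists>s1. QA (r1 j1) k1 = Val s1 \<and> QA (r1 j2) k1 = Val s1)" by auto
    have rr: "r1 j1 = r1 j2"
    proof (rule ccontr)
      assume ne: "r1 j1 \<noteq> r1 j2"
      then obtain s1 where "QA (r1 j1) k1 = Val s1" "QA (r1 j2) k1 = Val s1" using c by auto
      then show False using pda_C3[OF A R1(1) R2(1) k k] ne by auto
    qed
    have j1p: "pidx (r1 j1) (r2 j1) = j1" and j2p: "pidx (r1 j2) (r2 j2) = j2" using h pidx_r by auto
    have ne: "(r2 j1, k1') \<noteq> (r2 j2, k2)"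
    proof
      assume "(r2 j1, k1') = (r2 j2, k2)"
      then have "r2 j1 = r2 j2" "k1' = k2" by auto
      then have "j1 = j2" using j1p j2p rr by metis
      then show False using h(7) \<open>k1' = k2\<close> by simp
    qed
    then have c3: "r2 j1 \<noteq> r2 j2 \<and> k1' \<noteq> k2 \<and> QB (r2 j1) k2 = Star \<and> QB (r2 j2) k1' = Star"
      using pda_C3[OF B R1(2) R2(2) h(3) h(4) s2(2) _ ne] s2'(2) eq by blast
    then show ?thesis by (auto simp: PP_def)
  qed
  have f4: "\<forall>j1\<in>{1..F1*F2}. \<forall>j2\<in>{1..F1*F2}. \<forall>k1'\<in>{1..K2}. \<forall>k2\<in>{1..K2}. \<forall>s.
        PP k1 j1 k1' = Val s \<and> PP k1 j2 k2 = Val s \<and> (j1, k1') \<noteq> (j2, k2) \<longrightarrow>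
        j1 \<noteq> j2 \<and> k1' \<noteq> k2 \<and> PP k1 j1 k2 = Star \<and> PP k1 j2 k1' = Star"
  proof (intro ballI allI impI)
    fix j1 j2 k1' k2 s assume "j1\<in>{1..F1*F2}" "j2\<in>{1..F1*F2}" "k1'\<in>{1..K2}" "k2\<in>{1..K2}"
      "PP k1 j1 k1' = Val s \<and> PP k1 j2 k2 = Val s \<and> (j1, k1') \<noteq> (j2, k2)"
    then show "j1 \<noteq> j2 \<and> k1' \<noteq> k2 \<and> PP k1 j1 k2 = Star \<and> PP k1 j2 k1' = Star"
      using e4[of j1 j2 k1' k2 s] by blast
  qed
  have f1: "\<forall>j\<in>{1..F1*F2}. \<forall>k\<in>{1..K2}. PP k1 j k = Star \<or> (\<exists>s\<in>Ss k1. PP k1 j k = Val s)" using e1 by blast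
  have f2: "\<forall>k\<in>{1..K2}. card {j\<in>{1..F1*F2}. PP k1 j k = Star} = Z2 * F1" using e2 by blast
  have f3: "\<forall>s\<in>Ss k1. \<exists>j\<in>{1..F1*F2}. \<exists>k\<in>{1..K2}. PP k1 j k = Val s" using e3 by blast
  show ?thesis unfolding is_PDA_def using e0 f1 f2 f3 f4 by (intro conjI) (assumption | rule refl)+
qed

lemma hpda: "is_HPDA K1 K2 (F1*F2) (Z1*F2) (Z2*F1) Sm Ss P0 PP"
proof -
  have e0: "0 < K1" "0 < Z1*F2" "0 < K2" "0 < Z2*F1" "0 < F1 * F2" "Z1 * F2 < F1 * F2" "Z2 * F1 < F1 * F2"
    using F1pos F2pos pda_pos[OF A] pda_pos[OF B] pda_ZF[OF A] pda_ZF[OF B] by auto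
  have e1: "card {j\<in>{1..F1*F2}. P0 j k1 = MStar} = Z1 * F2" if k: "k1 \<in> {1..K1}" for k1
  proof -
    have "{j\<in>{1..F1*F2}. P0 j k1 = MStar} = {j\<in>{1..F1*F2}. QA (r1 j) k1 = Star}" by (auto simp: P0_def)
    then show ?thesis using card_rowsA[OF k] by simp
  qed
  have e3: "(\<exists>!k1. k1 \<in> {1..K1} \<and> (\<exists>j\<in>{1..F1*F2}. \<exists>k2\<in>{1..K2}. PP k1 j k2 = Val s)) \<and>
     (\<forall>k1\<in>{1..K1}. \<forall>j\<in>{1..F1*F2}. \<forall>k2\<in>{1..K2}. PP k1 j k2 = Val s \<longrightarrow> P0 j k1 = MStar)" if sin: "s \<in> Sm" for s
  proof -
    obtain k1 j1 s2 where h: "k1\<in>{1..K1}" "j1 \<in> {1..F1}" "QA j1 k1 = Star" "s2 \<in> {1..int S2}" "s = pv k1 j1 s2"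
      using sin unfolding Sm_def by auto
    have gs: "s = g k1 j1 s2" using h by (simp add: g_def)
    have key: "k1' = k1 \<and> P0 j k1' = MStar" if hk: "k1' \<in> {1..K1}" "j \<in> {1..F1*F2}" "k2 \<in> {1..K2}" "PP k1' j k2 = Val s" for k1' j k2
    proof -
      obtain s2' where s2': "s2'\<in>{1..int S2}" "QB (r2 j) k2 = Val s2'" "s = g k1' (r1 j) s2'" using PP_val hk by blast
      have R: "r1 j \<in> {1..F1}" using r_range hk by auto
      from gval[OF h(1,2,4) hk(1) R s2'(1)] gs s2' h(3) have "k1 = k1' \<and> j1 = r1 j" by auto
      then show ?thesis using h(3) by (auto simp: P0_def)
    qed
    obtain j2 k2 where jk: "j2 \<in> {1..F2}" "k2 \<in> {1..K2}" "QB j2 k2 = Val s2" using pda_occ[OF B] h by blast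
    have "PP k1 (pidx j1 j2) k2 = Val s" using h jk r1_pidx r2_pidx gs by (simp add: PP_def)
    then have ex: "\<exists>j\<in>{1..F1*F2}. \<exists>k2\<in>{1..K2}. PP k1 j k2 = Val s" using pidx_range h jk by blast
    show ?thesis using ex h(1) key by blast
  qed
  have e4: "(is_int_entry (PP k1 j' k2) \<longrightarrow> P0 j' k1 = MStar) \<and> (is_int_entry (PP k1' j k2') \<longrightarrow> P0 j k1' = MStar)"
    if h: "k1 \<in> {1..K1}" "k1' \<in> {1..K1}" "j \<in> {1..F1*F2}" "j' \<in> {1..F1*F2}" "k2 \<in> {1..K2}" "k2' \<in> {1..K2}"
    "k1 \<noteq> k1'" "PP k1 j k2 = Val s" "PP k1' j' k2' = Val s" for k1 k1' j j' k2 k2' s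
  proof -
    obtain s2 where s2: "s2\<in>{1..int S2}" "QB (r2 j) k2 = Val s2" "s = g k1 (r1 j) s2" using PP_val h by blast
    obtain s2' where s2': "s2'\<in>{1..int S2}" "QB (r2 j') k2' = Val s2'" "s = g k1' (r1 j') s2'" using PP_val h by blast
    have R: "r1 j \<in> {1..F1}" "r1 j' \<in> {1..F1}" using r_range h by auto
    from gval[OF h(1) R(1) s2(1) h(2) R(2) s2'(1)] s2 s2' h(7) obtain s1 where
      "QA (r1 j) k1 = Val s1" "QA (r1 j') k1' = Val s1" by auto
    then have "QA (r1 j) k1' = Star \<and> QA (r1 j') k1 = Star" using pda_C3[OF A R(1) R(2) h(1) h(2)] h(7) by auto
    then show ?thesis by (simp add: P0_def)
  qed
  have f1: "\<forall>k1\<in>{1..K1}. card {j\<in>{1..F1*F2}. P0 j k1 = MStar} = Z1 * F2" using e1 by blast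
  have f2: "\<forall>k1\<in>{1..K1}. is_PDA K2 (F1*F2) (Z2*F1) (card (Ss k1)) (Ss k1) (PP k1)" using PP_pda by blast
  have f3: "\<forall>s\<in>Sm. (\<exists>!k1. k1 \<in> {1..K1} \<and> (\<exists>j\<in>{1..F1*F2}. \<exists>k2\<in>{1..K2}. PP k1 j k2 = Val s)) \<and>
     (\<forall>k1\<in>{1..K1}. \<forall>j\<in>{1..F1*F2}. \<forall>k2\<in>{1..K2}. PP k1 j k2 = Val s \<longrightarrow> P0 j k1 = MStar)"
    using e3 by (intro ballI) blast
  have f4: "\<forall>k1\<in>{1..K1}. \<forall>k1'\<in>{1..K1}. \<forall>j\<in>{1..F1*F2}. \<forall>j'\<in>{1..F1*F2}. \<forall>k2\<in>{1..K2}. \<forall>k2'\<in>{1..K2}. \<forall>s.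
        k1 \<noteq> k1' \<and> PP k1 j k2 = Val s \<and> PP k1' j' k2' = Val s \<longrightarrow>
        (is_int_entry (PP k1 j' k2) \<longrightarrow> P0 j' k1 = MStar) \<and>
        (is_int_entry (PP k1' j k2') \<longrightarrow> P0 j k1' = MStar)"
  proof (intro ballI allI impI)
    fix k1 k1' j j' k2 k2' s
    assume "k1 \<in> {1..K1}" "k1' \<in> {1..K1}" "j \<in> {1..F1*F2}" "j' \<in> {1..F1*F2}" "k2 \<in> {1..K2}" "k2' \<in> {1..K2}"
      "k1 \<noteq> k1' \<and> PP k1 j k2 = Val s \<and> PP k1' j' k2' = Val s"
    then show "(is_int_entry (PP k1 j' k2) \<longrightarrow> P0 j' k1 = MStar) \<and> (is_int_entry (PP k1' j k2') \<longrightarrow> P0 j k1' = MStar)"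
      using e4[of k1 k1' j j' k2 k2' s] by blast
  qed
  show ?thesis unfolding is_HPDA_def using e0 f1 f2 f3 f4 by (intro conjI) assumption+
qed

definition Bset :: "int \<Rightarrow> (nat \<times> nat) set" where
  "Bset s2 = {(j2,k2). j2\<in>{1..F2} \<and> k2\<in>{1..K2} \<and> QB j2 k2 = Val s2}"
definition Aset :: "int \<Rightarrow> (nat \<times> nat) set" where
  "Aset s1 = {(j1,k1). j1\<in>{1..F1} \<and> k1\<in>{1..K1} \<and> QA j1 k1 = Val s1}"
definition XX :: "nat \<Rightarrow> (nat \<Rightarrow> nat \<Rightarrow> nat) \<Rightarrow> (nat \<Rightarrow> nat \<Rightarrow> bool list) \<Rightarrow> nat \<Rightarrow> int \<Rightarrow> nat \<Rightarrow> bool list" where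
  "XX L d V k1 s2 j1 = xsum L (\<lambda>(j2,k2). V (d k1 k2) (pidx j1 j2)) (Bset s2)"
definition EE :: "nat \<Rightarrow> (nat \<Rightarrow> nat \<Rightarrow> nat) \<Rightarrow> (nat \<Rightarrow> nat \<Rightarrow> bool list) \<Rightarrow> nat \<Rightarrow> nat \<Rightarrow> bool list" where
  "EE L d W a b = xsum L (\<lambda>(j1,k1). XX L d W k1 (int b + 1) j1) (Aset (int a + 1))"
definition enc :: "nat \<Rightarrow> (nat \<Rightarrow> nat \<Rightarrow> nat) \<Rightarrow> (nat \<Rightarrow> nat \<Rightarrow> bool list) \<Rightarrow> bool list list" where
  "enc L d W = map (\<lambda>t. EE L d W (t div S2) (t mod S2)) [0..<S1*S2]"
definition YY :: "nat \<Rightarrow> nat \<Rightarrow> (nat \<Rightarrow> nat \<Rightarrow> nat) \<Rightarrow> bool list list \<Rightarrow> (nat \<Rightarrow> nat \<Rightarrow> bool list) \<Rightarrow> nat \<Rightarrow> nat \<Rightarrow> bool list" where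
  "YY L k1 d m C b a = (case QA (a+1) k1 of Star \<Rightarrow> XX L d C k1 (int b + 1) (a+1)
     | Val s1 \<Rightarrow> xdec L (m ! ((nat s1 - 1) * S2 + b)) (\<lambda>(j1',k1'). XX L d C k1' (int b + 1) j1') (Aset s1 - {(a+1,k1)}))"
definition menc :: "nat \<Rightarrow> nat \<Rightarrow> (nat \<Rightarrow> nat \<Rightarrow> nat) \<Rightarrow> bool list list \<Rightarrow> (nat \<Rightarrow> nat \<Rightarrow> bool list) \<Rightarrow> bool list list" where
  "menc L k1 d m C = map (\<lambda>t. YY L k1 d m C (t div F1) (t mod F1)) [0..<S2*F1]"
definition dec :: "nat \<Rightarrow> nat \<Rightarrow> nat \<Rightarrow> (nat \<Rightarrow> nat \<Rightarrow> nat) \<Rightarrow> bool list list \<Rightarrow> (nat \<Rightarrow> nat \<Rightarrow> bool list) \<Rightarrow> nat \<Rightarrow> bool list" where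
  "dec L k1 k2 d m C f = (case QB (r2 f) k2 of Star \<Rightarrow> C (d k1 k2) f
     | Val s2 \<Rightarrow> xdec L (m ! ((nat s2 - 1) * F1 + (r1 f - 1))) (\<lambda>(j2',k2'). C (d k1 k2') (pidx (r1 f) j2')) (Bset s2 - {(r2 f, k2)}))"
definition Zm :: "nat \<Rightarrow> nat \<Rightarrow> (nat \<times> nat) set" where
  "Zm N k1 = {(n,f). n\<in>{1..N} \<and> f\<in>{1..F1*F2} \<and> QA (r1 f) k1 = Star}"
definition Zu :: "nat \<Rightarrow> nat \<Rightarrow> nat \<Rightarrow> (nat \<times> nat) set" where
  "Zu N k1 k2 = {(n,f). n\<in>{1..N} \<and> f\<in>{1..F1*F2} \<and> QB (r2 f) k2 = Star}"

lemma Bset_fin: "finite (Bset s)"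
proof -
  have "Bset s \<subseteq> {1..F2} \<times> {1..K2}" unfolding Bset_def by auto
  then show ?thesis by (rule finite_subset) simp
qed
lemma Aset_fin: "finite (Aset s)"
proof -
  have "Aset s \<subseteq> {1..F1} \<times> {1..K1}" unfolding Aset_def by auto
  then show ?thesis by (rule finite_subset) simp
qed

lemma YY_len: "length (YY L k1 d m C b a) = L"
  by (cases "QA (a+1) k1") (simp_all add: YY_def XX_def)

lemma XX_len: "length (XX L d V k1 s j) = L" by (simp add: XX_def)

context
  fixes N L d W
  assumes vd: "valid_demand K1 K2 N d" and vl: "valid_library N (F1*F2) L W"
begin

lemma dval: "k1 \<in> {1..K1} \<Longrightarrow> k2 \<in> {1..K2} \<Longrightarrow> d k1 k2 \<in> {1..N}"
  using vd unfolding valid_demand_def by blast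
lemma wlen: "n \<in> {1..N} \<Longrightarrow> f \<in> {1..F1*F2} \<Longrightarrow> length (W n f) = L"
  using vl unfolding valid_library_def by blast

lemma XX_cache:
  assumes k: "k1 \<in> {1..K1}" and j: "j1 \<in> {1..F1}"
    and cached: "\<And>n f. n \<in> {1..N} \<Longrightarrow> f \<in> {1..F1*F2} \<Longrightarrow> r1 f = j1 \<Longrightarrow> (n, f) \<in> Z"
  shows "XX L d (cache_content Z W) k1 s2 j1 = XX L d W k1 s2 j1"
  unfolding XX_def
proof (rule xsum_cong)
  fix a assume "a \<in> Bset s2"
  then obtain j2 k2 where a: "a = (j2,k2)" "j2 \<in> {1..F2}" "k2 \<in> {1..K2}" unfolding Bset_def by auto
  have "(d k1 k2, pidx j1 j2) \<in> Z" using cached[OF dval[OF k a(3)] pidx_range[OF j a(2)]] r1_pidx j a(2) by auto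
  then show "(\<lambda>(j2,k2). cache_content Z W (d k1 k2) (pidx j1 j2)) a = (\<lambda>(j2,k2). W (d k1 k2) (pidx j1 j2)) a"
    using a by (simp add: cache_content_def)
qed

lemma enc_nth: "a < S1 \<Longrightarrow> b < S2 \<Longrightarrow> enc L d W ! (a * S2 + b) = EE L d W a b"
proof -
  assume h: "a < S1" "b < S2"
  have "a * S2 + b < a * S2 + S2" using h by simp
  also have "\<dots> = (a + 1) * S2" by simp
  also have "\<dots> \<le> S1 * S2" using h by (intro mult_right_mono) auto
  finally have lt: "a * S2 + b < S1 * S2" .
  have "(a * S2 + b) div S2 = a" "(a * S2 + b) mod S2 = b" using h by auto
  then show ?thesis using lt by (simp add: enc_def)
qed

lemma YY_correct:
  assumes k: "k1 \<in> {1..K1}" and a: "a < F1" and b: "b < S2"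
  shows "YY L k1 d (enc L d W) (cache_content (Zm N k1) W) b a = XX L d W k1 (int b + 1) (a+1)"
proof -
  have ar: "a + 1 \<in> {1..F1}" using a by simp
  consider (st) "QA (a+1) k1 = Star" | (v) s1 where "s1\<in>{1..int S1}" "QA (a+1) k1 = Val s1"
    using QA_cases[OF ar k] by blast
  then show ?thesis
  proof cases
    case st
    have "XX L d (cache_content (Zm N k1) W) k1 (int b + 1) (a+1) = XX L d W k1 (int b + 1) (a+1)"
      by (rule XX_cache[OF k ar]) (use st in \<open>auto simp: Zm_def\<close>)
    then show ?thesis using st by (simp add: YY_def)
  next
    case v
    define a1 where "a1 = nat s1 - 1"
    have a1: "a1 < S1" "int a1 + 1 = s1" using v(1) unfolding a1_def by auto
    have m: "enc L d W ! ((nat s1 - 1) * S2 + b) = EE L d W a1 b" using enc_nth[OF a1(1) b] unfolding a1_def by simp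
    have tA: "(a+1, k1) \<in> Aset s1" using v ar k unfolding Aset_def by auto
    have others: "XX L d (cache_content (Zm N k1) W) k1' (int b + 1) j1' = XX L d W k1' (int b + 1) j1'"
      if o: "(j1', k1') \<in> Aset s1 - {(a+1,k1)}" for j1' k1'
    proof -
      have o2: "j1' \<in> {1..F1}" "k1' \<in> {1..K1}" "QA j1' k1' = Val s1" "(j1', k1') \<noteq> (a+1, k1)"
        using o unfolding Aset_def by auto
      have "QA j1' k1 = Star" using pda_C3[OF A o2(1) ar o2(2) k o2(3) v(2) o2(4)] by blast
      then show ?thesis by (intro XX_cache[OF o2(2) o2(1)]) (auto simp: Zm_def)
    qed
    have "xdec L (EE L d W a1 b) (\<lambda>(j1',k1'). XX L d (cache_content (Zm N k1) W) k1' (int b + 1) j1') (Aset s1 - {(a+1,k1)})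
        = (\<lambda>(j1,k1). XX L d W k1 (int b + 1) j1) (a+1, k1)"
      unfolding EE_def a1(2)
    proof (rule xdec_correct[OF Aset_fin tA])
      show "length ((\<lambda>(j1,k1). XX L d W k1 (int b + 1) j1) (a+1, k1)) = L" by (simp add: XX_len)
    next
      fix x assume "x \<in> Aset s1 - {(a+1,k1)}"
      then show "(\<lambda>(j1',k1'). XX L d (cache_content (Zm N k1) W) k1' (int b + 1) j1') x = (\<lambda>(j1,k1). XX L d W k1 (int b + 1) j1) x"
        using others by (cases x) simp
    qed
    then show ?thesis using v m by (simp add: YY_def)
  qed
qed

lemma menc_nth: "k1 \<in> {1..K1} \<Longrightarrow> b < S2 \<Longrightarrow> a < F1 \<Longrightarrow>
   menc L k1 d (enc L d W) (cache_content (Zm N k1) W) ! (b * F1 + a) = XX L d W k1 (int b + 1) (a+1)"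
proof -
  assume h: "k1 \<in> {1..K1}" "b < S2" "a < F1"
  have "b * F1 + a < b * F1 + F1" using h by simp
  also have "\<dots> = (b + 1) * F1" by simp
  also have "\<dots> \<le> S2 * F1" using h by (intro mult_right_mono) auto
  finally have lt: "b * F1 + a < S2 * F1" .
  have "(b * F1 + a) div F1 = b" "(b * F1 + a) mod F1 = a" using h by auto
  then show ?thesis using lt YY_correct[OF h(1) h(3) h(2)] by (simp add: menc_def)
qed

lemma dec_correct:
  assumes k1: "k1 \<in> {1..K1}" and k2: "k2 \<in> {1..K2}" and f: "f \<in> {1..F1*F2}"
  shows "dec L k1 k2 d (menc L k1 d (enc L d W) (cache_content (Zm N k1) W)) (cache_content (Zu N k1 k2) W) f = W (d k1 k2) f"
proof -
  have R: "r1 f \<in> {1..F1}" "r2 f \<in> {1..F2}" using r_range[OF f] by auto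
  consider (st) "QB (r2 f) k2 = Star" | (v) s2 where "s2\<in>{1..int S2}" "QB (r2 f) k2 = Val s2"
    using QB_cases[OF R(2) k2] by blast
  then show ?thesis
  proof cases
    case st
    then have "(d k1 k2, f) \<in> Zu N k1 k2" using dval[OF k1 k2] f by (simp add: Zu_def)
    then show ?thesis using st by (simp add: dec_def cache_content_def)
  next
    case v
    define b where "b = nat s2 - 1"
    have b: "b < S2" "int b + 1 = s2" using v(1) unfolding b_def by auto
    have m: "menc L k1 d (enc L d W) (cache_content (Zm N k1) W) ! ((nat s2 - 1) * F1 + (r1 f - 1))
        = XX L d W k1 s2 (r1 f)"
    proof -
      have lt: "r1 f - 1 < F1" using R by auto
      have e: "int b + 1 = s2" "r1 f - 1 + 1 = r1 f" using b R by auto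
      have e2: "int (nat s2 - 1) + 1 = s2" using b unfolding b_def by simp
      show ?thesis using menc_nth[OF k1 b(1) lt] unfolding e(2) b_def e2 .
    qed
    have tB: "(r2 f, k2) \<in> Bset s2" using v R k2 unfolding Bset_def by auto
    have others: "cache_content (Zu N k1 k2) W (d k1 k2') (pidx (r1 f) j2') = W (d k1 k2') (pidx (r1 f) j2')"
      if o: "(j2', k2') \<in> Bset s2 - {(r2 f, k2)}" for j2' k2'
    proof -
      have o2: "j2' \<in> {1..F2}" "k2' \<in> {1..K2}" "QB j2' k2' = Val s2" "(j2', k2') \<noteq> (r2 f, k2)"
        using o unfolding Bset_def by auto
      have "QB j2' k2 = Star" using pda_C3[OF B o2(1) R(2) o2(2) k2 o2(3) v(2) o2(4)] by blast
      moreover have "r2 (pidx (r1 f) j2') = j2'" using r2_pidx R o2(1) by auto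
      ultimately have "(d k1 k2', pidx (r1 f) j2') \<in> Zu N k1 k2"
        using dval[OF k1 o2(2)] pidx_range[OF R(1) o2(1)] by (simp add: Zu_def)
      then show ?thesis by (simp add: cache_content_def)
    qed
    have len: "length (W (d k1 k2) (pidx (r1 f) (r2 f))) = L" using wlen[OF dval[OF k1 k2]] pidx_r f by auto
    have "xdec L (XX L d W k1 s2 (r1 f)) (\<lambda>(j2',k2'). cache_content (Zu N k1 k2) W (d k1 k2') (pidx (r1 f) j2')) (Bset s2 - {(r2 f, k2)})
        = (\<lambda>(j2,k2). W (d k1 k2) (pidx (r1 f) j2)) (r2 f, k2)"
      unfolding XX_def
    proof (rule xdec_correct[OF Bset_fin tB])
      show "length ((\<lambda>(j2,k2). W (d k1 k2) (pidx (r1 f) j2)) (r2 f, k2)) = L" using len by simp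
    next
      fix x assume "x \<in> Bset s2 - {(r2 f, k2)}"
      then show "(\<lambda>(j2',k2'). cache_content (Zu N k1 k2) W (d k1 k2') (pidx (r1 f) j2')) x = (\<lambda>(j2,k2). W (d k1 k2) (pidx (r1 f) j2)) x"
        using others by (cases x) simp
    qed
    then show ?thesis using v m pidx_r f by (simp add: dec_def)
  qed
qed

end

lemma card_Zm: "k1 \<in> {1..K1} \<Longrightarrow> card (Zm N k1) = N * (Z1 * F2)"
proof -
  assume k: "k1 \<in> {1..K1}"
  have "Zm N k1 = {1..N} \<times> {f\<in>{1..F1*F2}. QA (r1 f) k1 = Star}" unfolding Zm_def by auto
  then show ?thesis using card_rowsA[OF k] by (simp add: card_cartesian_product)
qed

lemma card_Zu: "k2 \<in> {1..K2} \<Longrightarrow> card (Zu N k1 k2) = N * (Z2 * F1)"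
proof -
  assume k: "k2 \<in> {1..K2}"
  have "Zu N k1 k2 = {1..N} \<times> {f\<in>{1..F1*F2}. QB (r2 f) k2 = Star}" unfolding Zu_def by auto
  then show ?thesis using card_rowsB[OF k] by (simp add: card_cartesian_product)
qed

lemma scheme:
  assumes NK: "N \<ge> K1 * K2" and Bp: "0 < B" and dv: "F1 * F2 dvd B"
  shows "hier_scheme K1 K2 (real N * real Z1 / real F1) (real N * real Z2 / real F2) N B (F1 * F2)
              (real (S1 * S2) / real (F1 * F2)) (real S2 / real F2)"
proof -
  define L where "L = B div (F1 * F2)"
  have BL: "B = F1 * F2 * L" using dv unfolding L_def by simp
  have F1r: "real F1 > 0" and F2r: "real F2 > 0" using F1pos F2pos by auto
  have mem1: "\<forall>k1\<in>{1..K1}. Zm N k1 \<subseteq> {1..N} \<times> {1..F1*F2} \<and>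
           real (card (Zm N k1) * (B div (F1*F2))) \<le> (real N * real Z1 / real F1) * real B"
  proof
    fix k1 assume k: "k1 \<in> {1..K1}"
    have "real (card (Zm N k1) * (B div (F1*F2))) = real N * real Z1 * real F2 * real L"
      using card_Zm[OF k] unfolding L_def[symmetric] by simp
    also have "\<dots> = (real N * real Z1 / real F1) * real B" unfolding BL using F1r by (simp add: field_simps)
    finally show "Zm N k1 \<subseteq> {1..N} \<times> {1..F1*F2} \<and>
           real (card (Zm N k1) * (B div (F1*F2))) \<le> (real N * real Z1 / real F1) * real B"
      unfolding Zm_def by auto
  qed
  have mem2: "\<forall>k1\<in>{1..K1}. \<forall>k2\<in>{1..K2}. Zu N k1 k2 \<subseteq> {1..N} \<times> {1..F1*F2} \<and>
           real (card (Zu N k1 k2) * (B div (F1*F2))) \<le> (real N * real Z2 / real F2) * real B"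
  proof (intro ballI)
    fix k1 k2 assume k: "k1 \<in> {1..K1}" "k2 \<in> {1..K2}"
    have "real (card (Zu N k1 k2) * (B div (F1*F2))) = real N * real Z2 * real F1 * real L"
      using card_Zu[OF k(2)] unfolding L_def[symmetric] by simp
    also have "\<dots> = (real N * real Z2 / real F2) * real B" unfolding BL using F2r by (simp add: field_simps)
    finally show "Zu N k1 k2 \<subseteq> {1..N} \<times> {1..F1*F2} \<and>
           real (card (Zu N k1 k2) * (B div (F1*F2))) \<le> (real N * real Z2 / real F2) * real B"
      unfolding Zu_def by auto
  qed
  have deliv: "\<forall>d W. valid_demand K1 K2 N d \<and> valid_library N (F1*F2) (B div (F1*F2)) W \<longrightarrow>
          length (enc L d W) = S1 * S2 \<and> (\<forall>x\<in>set (enc L d W). length x = B div (F1*F2)) \<and>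
          (\<forall>k1\<in>{1..K1}.
             length (menc L k1 d (enc L d W) (cache_content (Zm N k1) W)) = S2 * F1 \<and>
             (\<forall>y\<in>set (menc L k1 d (enc L d W) (cache_content (Zm N k1) W)). length y = B div (F1*F2)) \<and>
             (\<forall>k2\<in>{1..K2}. \<forall>f\<in>{1..F1*F2}.
                dec L k1 k2 d (menc L k1 d (enc L d W) (cache_content (Zm N k1) W))
                    (cache_content (Zu N k1 k2) W) f = W (d k1 k2) f))"
  proof (intro allI impI conjI ballI)
    fix d W assume h: "valid_demand K1 K2 N d \<and> valid_library N (F1*F2) (B div (F1*F2)) W"
    show "length (enc L d W) = S1 * S2" by (simp add: enc_def)
    show "length x = B div (F1*F2)" if "x \<in> set (enc L d W)" for x using that unfolding enc_def EE_def L_def by auto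
    fix k1 assume k: "k1 \<in> {1..K1}"
    show "length (menc L k1 d (enc L d W) (cache_content (Zm N k1) W)) = S2 * F1" by (simp add: menc_def)
    show "length y = B div (F1*F2)" if "y \<in> set (menc L k1 d (enc L d W) (cache_content (Zm N k1) W))" for y
      using that YY_len unfolding menc_def L_def by auto
    fix k2 f assume "k2 \<in> {1..K2}" "f \<in> {1..F1*F2}"
    then show "dec L k1 k2 d (menc L k1 d (enc L d W) (cache_content (Zm N k1) W))
                    (cache_content (Zu N k1 k2) W) f = W (d k1 k2) f"
      using dec_correct[of N d L W k1 k2 f] h k unfolding L_def by blast
  qed
  have K1p: "0 < K1" using pda_pos[OF A] by simp
  have K2p: "0 < K2" using pda_pos[OF B] by simp
  have N1: "1 \<le> N" using NK K1p K2p by (metis One_nat_def Suc_leI le_trans nat_0_less_mult_iff)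
  have vd1: "valid_demand K1 K2 N (\<lambda>_ _. 1)" using N1 by (simp add: valid_demand_def)
  have loads: "(\<forall>d. valid_demand K1 K2 N d \<longrightarrow> real (S1 * S2) / real (F1*F2) \<le> real (S1 * S2) / real (F1 * F2)) \<and>
       (\<exists>d. valid_demand K1 K2 N d \<and> real (S1 * S2) / real (F1*F2) = real (S1 * S2) / real (F1 * F2)) \<and>
       (\<forall>d. \<forall>k1\<in>{1..K1}. valid_demand K1 K2 N d \<longrightarrow> real (S2 * F1) / real (F1*F2) \<le> real S2 / real F2) \<and>
       (\<exists>d. \<exists>k1\<in>{1..K1}. valid_demand K1 K2 N d \<and> real (S2 * F1) / real (F1*F2) = real S2 / real F2)"
  proof -
    have e: "real (S2 * F1) / real (F1*F2) = real S2 / real F2" using F1r F2r by (simp add: field_simps)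
    have k1: "1 \<in> {1..K1}" using K1p by simp
    show ?thesis using e vd1 k1 by auto
  qed
  have pos: "0 < F1 * F2" "F1 * F2 dvd B" using F1pos F2pos dv by auto
  show ?thesis unfolding hier_scheme_def
    apply (rule conjI, rule pos(1), rule conjI, rule pos(2))
    apply (rule exI[where x="Zm N"], rule exI[where x="Zu N"], rule exI[where x="enc L"],
           rule exI[where x="\<lambda>d. S1 * S2"], rule exI[where x="menc L"], rule exI[where x="\<lambda>k1 d. S2 * F1"],
           rule exI[where x="dec L"])
    using mem1 mem2 deliv loads by (intro conjI) blast+
qed

end

theorem theorem3:
  fixes K1 F1 Z1 S1 K2 F2 Z2 S2 :: nat
    and QA QB :: "nat \<Rightarrow> nat \<Rightarrow> entry"
  assumes "is_PDA K1 F1 Z1 S1 {1..int S1} QA"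
      and "is_PDA K2 F2 Z2 S2 {1..int S2} QB"
  shows "(\<exists>(Sm :: int set) (Ss :: nat \<Rightarrow> int set) P0 P.
            is_HPDA K1 K2 (F1 * F2) (Z1 * F2) (Z2 * F1) Sm Ss P0 P \<and>
            int (card (\<Union>k1\<in>{1..K1}. Ss k1)) - int (card Sm) = int (S1 * S2) \<and>
            (\<forall>k1\<in>{1..K1}. card (Ss k1) = F1 * S2))
       \<and> (\<forall>N B. N \<ge> K1 * K2 \<and> 0 < B \<and> F1 * F2 dvd B \<longrightarrow>
            hier_scheme K1 K2 (real N * real Z1 / real F1) (real N * real Z2 / real F2) N B (F1 * F2)
              (real (S1 * S2) / real (F1 * F2)) (real S2 / real F2))"
proof -
  interpret hp K1 F1 Z1 S1 K2 F2 Z2 S2 QA QB using assms by (unfold_locales)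
  have c: "int (card (\<Union>k1\<in>{1..K1}. Ss k1)) - int (card Sm) = int (S1 * S2)"
    using card_union by simp
  have p1: "\<exists>(Sm :: int set) (Ss :: nat \<Rightarrow> int set) P0 P.
            is_HPDA K1 K2 (F1 * F2) (Z1 * F2) (Z2 * F1) Sm Ss P0 P \<and>
            int (card (\<Union>k1\<in>{1..K1}. Ss k1)) - int (card Sm) = int (S1 * S2) \<and>
            (\<forall>k1\<in>{1..K1}. card (Ss k1) = F1 * S2)"
    using hpda c card_Ss by blast
  show ?thesis using p1 scheme by blast
qed

end
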